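(* Let $(\Gamma,\rho)$ be a voltage graph with $\Gamma$ strongly connected and $G$ a finite group. Then for any two vertices $v_i,v_j$ of $\Gamma$, $\mathrm{Net}(v_i,v_j)=\mathrm{Net}^*(v_i,v_j)$.
   Context: $\Gamma=(V,E)$ is a simple digraph, $e_{ij}$ the edge $v_i\to v_j$; a voltage graph is $(\Gamma,\rho)$ with $\rho:E\to G$, $G$ finite with identity $\mathbf 1$. A semi-walk from $v_{i_1}$ to $v_{i_n}$ is $w=v_{i_1}a_1\dots a_{n-1}v_{i_n}$ where each $a_j$ is either $e_{i_ji_{j+1}}$ or $e_{i_{j+1}i_j}$; it is a walk if every $a_j=e_{i_ji_{j+1}}$ (a single vertex is a trivial walk). Net voltage: $f(w)=\bar\rho(a_1)\cdots\bar\rho(a_{n-1})$, $\bar\rho(a_j)=\rho(a_j)$ if $a_j=e_{i_ji_{j+1}}$, else $\rho(a_j)^{-1}$; $f$ of a trivial semi-walk is $\mathbf 1$. $\mathrm{Net}(v_i,v_j)=\{f(w): w$ semi-walk from $v_i$ to $v_j\}$ and $\mathrm{Net}^*(v_i,v_j)=\{f(w): w$ walk from $v_i$ to $v_j\}$. $\Gamma$ is strongly connected if for every ordered pair of distinct vertices there is a walk (path) from the first to the second. *)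

theory Defs
  imports "HOL-Algebra.Group"
begin

definition simple_digraph :: "'v set \<Rightarrow> ('v \<times> 'v) set \<Rightarrow> bool" where
  "simple_digraph V E \<longleftrightarrow> finite V \<and> E \<subseteq> V \<times> V \<and> (\<forall>v. (v, v) \<notin> E)"

definition voltage_graph :: "('a, 'b) monoid_scheme \<Rightarrow> 'v set \<Rightarrow> ('v \<times> 'v) set \<Rightarrow> ('v \<times> 'v \<Rightarrow> 'a) \<Rightarrow> bool" where
  "voltage_graph G V E \<rho> \<longleftrightarrow> group G \<and> simple_digraph V E \<and> (\<forall>e\<in>E. \<rho> e \<in> carrier G)"

text \<open>A semi-walk from u to v is given by its sequence of traversed arcs a_1 ... a_{n-1};
  each entry (True, e) means arc e is traversed forwards, (False, e) backwards.\<close>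
fun semiwalk :: "'v set \<Rightarrow> ('v \<times> 'v) set \<Rightarrow> 'v \<Rightarrow> (bool \<times> ('v \<times> 'v)) list \<Rightarrow> 'v \<Rightarrow> bool" where
  "semiwalk V E u [] v \<longleftrightarrow> u = v \<and> u \<in> V"
| "semiwalk V E u ((fwd, (a, b)) # rest) v \<longleftrightarrow>
     (a, b) \<in> E \<and> (if fwd then a = u \<and> semiwalk V E b rest v else b = u \<and> semiwalk V E a rest v)"

definition walk :: "'v set \<Rightarrow> ('v \<times> 'v) set \<Rightarrow> 'v \<Rightarrow> (bool \<times> ('v \<times> 'v)) list \<Rightarrow> 'v \<Rightarrow> bool" where
  "walk V E u w v \<longleftrightarrow> semiwalk V E u w v \<and> (\<forall>s\<in>set w. fst s)"

fun net_voltage :: "('a, 'b) monoid_scheme \<Rightarrow> ('v \<times> 'v \<Rightarrow> 'a) \<Rightarrow> (bool \<times> ('v \<times> 'v)) list \<Rightarrow> 'a" where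
  "net_voltage G \<rho> [] = \<one>\<^bsub>G\<^esub>"
| "net_voltage G \<rho> ((fwd, e) # rest) =
     (if fwd then \<rho> e else inv\<^bsub>G\<^esub> (\<rho> e)) \<otimes>\<^bsub>G\<^esub> net_voltage G \<rho> rest"

definition Net :: "('a, 'b) monoid_scheme \<Rightarrow> 'v set \<Rightarrow> ('v \<times> 'v) set \<Rightarrow> ('v \<times> 'v \<Rightarrow> 'a) \<Rightarrow> 'v \<Rightarrow> 'v \<Rightarrow> 'a set" where
  "Net G V E \<rho> u v = {net_voltage G \<rho> w | w. semiwalk V E u w v}"

definition Net_star :: "('a, 'b) monoid_scheme \<Rightarrow> 'v set \<Rightarrow> ('v \<times> 'v) set \<Rightarrow> ('v \<times> 'v \<Rightarrow> 'a) \<Rightarrow> 'v \<Rightarrow> 'v \<Rightarrow> 'a set" where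
  "Net_star G V E \<rho> u v = {net_voltage G \<rho> w | w. walk V E u w v}"

definition strongly_connected :: "'v set \<Rightarrow> ('v \<times> 'v) set \<Rightarrow> bool" where
  "strongly_connected V E \<longleftrightarrow> (\<forall>u\<in>V. \<forall>v\<in>V. u \<noteq> v \<longrightarrow> (\<exists>w. walk V E u w v))"

end

theory Submission
  imports Defs "HOL-Algebra.Multiplicative_Group"
begin

lemma semiwalk_in_V: "semiwalk V E u w v \<Longrightarrow> E \<subseteq> V \<times> V \<Longrightarrow> u \<in> V"
proof (induction w arbitrary: u)
  case Nil then show ?case by auto
next
  case (Cons s w)
  obtain f a b where s: "s = (f, (a, b))" by (cases s) auto
  show ?case using Cons by (auto simp: s split: if_splits)
qed

lemma semiwalk_append:
  assumes "E \<subseteq> V \<times> V"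
  shows "semiwalk V E u (w1 @ w2) v \<longleftrightarrow> (\<exists>m. semiwalk V E u w1 m \<and> semiwalk V E m w2 v)"
proof (induction w1 arbitrary: u)
  case Nil
  then show ?case using semiwalk_in_V[OF _ assms] by auto
next
  case (Cons s w1)
  obtain f a b where s: "s = (f, (a, b))" by (cases s) auto
  show ?case using Cons by (auto simp: s)
qed

lemma nv_carrier:
  assumes "group G" "\<forall>e\<in>E. \<rho> e \<in> carrier G" "semiwalk V E u w v"
  shows "net_voltage G \<rho> w \<in> carrier G"
  using assms(3)
proof (induction w arbitrary: u)
  case Nil then show ?case using group.is_monoid[OF assms(1)] by (simp add: monoid.one_closed)
next
  case (Cons s w)
  obtain f a b where s: "s = (f, (a, b))" by (cases s) auto
  interpret group G by fact
  show ?case using Cons assms(2) by (auto simp: s split: if_splits)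
qed

lemma nv_append:
  assumes "group G" "\<forall>e\<in>E. \<rho> e \<in> carrier G" "semiwalk V E u w1 m" "semiwalk V E m w2 v"
  shows "net_voltage G \<rho> (w1 @ w2) = net_voltage G \<rho> w1 \<otimes>\<^bsub>G\<^esub> net_voltage G \<rho> w2"
  using assms(3)
proof (induction w1 arbitrary: u)
  case Nil
  interpret group G by fact
  show ?case using nv_carrier[OF assms(1,2,4)] by simp
next
  case (Cons s w)
  obtain f a b where s: "s = (f, (a, b))" by (cases s) auto
  interpret group G by fact
  from Cons.prems obtain x where x: "semiwalk V E x w m" and e: "(a,b) \<in> E"
    by (auto simp: s split: if_splits)
  have c1: "net_voltage G \<rho> w \<in> carrier G" using nv_carrier[OF assms(1,2) x] .
  have c2: "net_voltage G \<rho> w2 \<in> carrier G" using nv_carrier[OF assms(1,2,4)] .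
  have c3: "\<rho> (a,b) \<in> carrier G" using e assms(2) by auto
  show ?case using Cons.IH[OF x] c1 c2 c3 by (simp add: s m_assoc)
qed

lemma walk_append:
  "walk V E u w1 m \<Longrightarrow> walk V E m w2 v \<Longrightarrow> walk V E u (w1 @ w2) v"
  unfolding walk_def by (induction w1 arbitrary: u) (auto split: if_splits)

lemma walk_pow:
  assumes "group G" "\<forall>e\<in>E. \<rho> e \<in> carrier G" "walk V E a c a" "a \<in> V"
  shows "walk V E a (concat (replicate n c)) a \<and>
         net_voltage G \<rho> (concat (replicate n c)) = net_voltage G \<rho> c [^]\<^bsub>G\<^esub> n"
proof (induction n)
  case 0 then show ?case using assms(4) by (simp add: walk_def)
next
  case (Suc n)
  interpret group G by fact
  have w: "walk V E a (c @ concat (replicate n c)) a"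
    using walk_append[OF assms(3)] Suc by blast
  have cc: "net_voltage G \<rho> c \<in> carrier G"
    using nv_carrier[OF assms(1,2)] assms(3) unfolding walk_def by blast
  have "net_voltage G \<rho> (c @ concat (replicate n c)) =
        net_voltage G \<rho> c \<otimes>\<^bsub>G\<^esub> net_voltage G \<rho> (concat (replicate n c))"
    using nv_append[OF assms(1,2)] assms(3) Suc unfolding walk_def by blast
  moreover have "net_voltage G \<rho> c \<otimes>\<^bsub>G\<^esub> net_voltage G \<rho> c [^]\<^bsub>G\<^esub> n = net_voltage G \<rho> c [^]\<^bsub>G\<^esub> Suc n"
    using nat_pow_Suc2[OF cc] by simp
  ultimately show ?case using w Suc by simp
qed

lemma back_edge:
  assumes vg: "voltage_graph G V E \<rho>" and fin: "finite (carrier G)"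
    and sc: "strongly_connected V E" and e: "(a,b) \<in> E"
  shows "\<exists>w. walk V E b w a \<and> net_voltage G \<rho> w = inv\<^bsub>G\<^esub> (\<rho> (a,b))"
proof -
  have grp: "group G" and sd: "simple_digraph V E" and rc: "\<forall>e\<in>E. \<rho> e \<in> carrier G"
    using vg unfolding voltage_graph_def by auto
  interpret group G by (fact grp)
  have ab: "a \<in> V" "b \<in> V" "a \<noteq> b" using sd e unfolding simple_digraph_def by auto
  obtain p where p: "walk V E b p a" using sc ab unfolding strongly_connected_def by metis
  define c where "c = (True, (a,b)) # p"
  have wc: "walk V E a c a" using p e unfolding c_def walk_def by simp
  define x where "x = net_voltage G \<rho> p"
  have xc: "x \<in> carrier G" using nv_carrier[OF grp rc] p unfolding walk_def x_def by blast
  have rc': "\<rho> (a,b) \<in> carrier G" using rc e by auto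
  define h where "h = \<rho> (a,b) \<otimes>\<^bsub>G\<^esub> x"
  have hv: "net_voltage G \<rho> c = h" unfolding c_def h_def x_def by simp
  have hc: "h \<in> carrier G" unfolding h_def using xc rc' by simp
  define n where "n = group.ord G h - 1"
  have o1: "group.ord G h \<ge> 1" using ord_ge_1[OF fin hc] .
  have "h [^]\<^bsub>G\<^esub> n \<otimes>\<^bsub>G\<^esub> h = h [^]\<^bsub>G\<^esub> group.ord G h"
    using o1 unfolding n_def by (simp add: nat_pow_Suc[symmetric] hc)
  hence hn: "h [^]\<^bsub>G\<^esub> n \<otimes>\<^bsub>G\<^esub> h = \<one>\<^bsub>G\<^esub>" using hc by simp
  have hnc: "h [^]\<^bsub>G\<^esub> n \<in> carrier G" using hc by simp
  have hinv: "h [^]\<^bsub>G\<^esub> n = inv\<^bsub>G\<^esub> h" using inv_unique[OF hn] hnc hc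
    by (metis hn inv_equality)
  obtain q where q: "walk V E a q a" "net_voltage G \<rho> q = h [^]\<^bsub>G\<^esub> n"
    using walk_pow[OF grp rc wc ab(1), of n] hv by blast
  have w: "walk V E b (p @ q) a" using walk_append[OF p q(1)] .
  have "net_voltage G \<rho> (p @ q) = x \<otimes>\<^bsub>G\<^esub> h [^]\<^bsub>G\<^esub> n"
  proof -
    have "net_voltage G \<rho> (p @ q) = net_voltage G \<rho> p \<otimes>\<^bsub>G\<^esub> net_voltage G \<rho> q"
      by (rule nv_append[OF grp rc]) (use p q in \<open>auto simp: walk_def\<close>)
    then show ?thesis using q(2) unfolding x_def by simp
  qed
  also have "\<dots> = x \<otimes>\<^bsub>G\<^esub> inv\<^bsub>G\<^esub> (\<rho> (a,b) \<otimes>\<^bsub>G\<^esub> x)" using hinv h_def by simp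
  also have "\<dots> = inv\<^bsub>G\<^esub> (\<rho> (a,b))" using xc rc'
    by (simp add: inv_mult_group m_assoc[symmetric])
  finally show ?thesis using w by blast
qed

lemma main:
  assumes vg: "voltage_graph G V E \<rho>" and fin: "finite (carrier G)"
    and sc: "strongly_connected V E" and sw: "semiwalk V E u w v"
  shows "\<exists>w'. walk V E u w' v \<and> net_voltage G \<rho> w' = net_voltage G \<rho> w"
  using sw
proof (induction w arbitrary: u)
  case (Nil u) then have "walk V E u [] v" by (auto simp: walk_def)
  then show ?case by fastforce
next
  case (Cons s w)
  have grp: "group G" and rc: "\<forall>e\<in>E. \<rho> e \<in> carrier G"
    using vg unfolding voltage_graph_def by auto
  obtain f a b where s: "s = (f, (a, b))" by (cases s) auto
  show ?case
  proof (cases f)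
    case True
    with Cons.prems s have e: "(a,b) \<in> E" "a = u" "semiwalk V E b w v" by auto
    obtain w' where w': "walk V E b w' v" "net_voltage G \<rho> w' = net_voltage G \<rho> w"
      using Cons.IH e by blast
    show ?thesis
      by (rule exI[of _ "(True,(a,b)) # w'"]) (use e w' True s in \<open>auto simp: walk_def\<close>)
  next
    case False
    with Cons.prems s have e: "(a,b) \<in> E" "b = u" "semiwalk V E a w v" by auto
    obtain w' where w': "walk V E a w' v" "net_voltage G \<rho> w' = net_voltage G \<rho> w"
      using Cons.IH e by blast
    obtain r where r: "walk V E b r a" "net_voltage G \<rho> r = inv\<^bsub>G\<^esub> (\<rho> (a,b))"
      using back_edge[OF vg fin sc e(1)] by blast
    have "net_voltage G \<rho> (r @ w') = net_voltage G \<rho> r \<otimes>\<^bsub>G\<^esub> net_voltage G \<rho> w'"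
      using nv_append[OF grp rc] r w' unfolding walk_def by blast
    then show ?thesis using walk_append[OF r(1) w'(1)] r w' e False s
      by (intro exI[of _ "r @ w'"]) auto
  qed
qed

theorem theorem1:
  fixes G :: "('a, 'b) monoid_scheme"
    and V :: "'v set" and E :: "('v \<times> 'v) set" and \<rho> :: "'v \<times> 'v \<Rightarrow> 'a"
  assumes "voltage_graph G V E \<rho>"
    and "finite (carrier G)"
    and "strongly_connected V E"
    and "u \<in> V" and "v \<in> V"
  shows "Net G V E \<rho> u v = Net_star G V E \<rho> u v"
proof
  show "Net G V E \<rho> u v \<subseteq> Net_star G V E \<rho> u v"
  proof
    fix g assume "g \<in> Net G V E \<rho> u v"
    then obtain w where "semiwalk V E u w v" "g = net_voltage G \<rho> w" unfolding Net_def by blast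
    then show "g \<in> Net_star G V E \<rho> u v" 
    proof -
      obtain w' where "walk V E u w' v" "net_voltage G \<rho> w' = g" using main[OF assms(1-3) \<open>semiwalk V E u w v\<close>] \<open>g = _\<close> by auto
      then show ?thesis unfolding Net_star_def by blast
    qed
  qed
  show "Net_star G V E \<rho> u v \<subseteq> Net G V E \<rho> u v"
    unfolding Net_def Net_star_def walk_def by blast
qed

end
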